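(* Let $\sim$ (for each $N$) be an equivalence relation on $\{1,\dots,N\}^2$ with $(p,q)\sim(q,p)$ satisfying conditions (C1), (C2), (C3). Let $k$ be even and let $\pi$ be a crossing pair-partition of $\{1,\dots,k\}$. Then $$\frac{1}{N^{k/2+1}}\,\#\mathcal E^{(N)}_k(\pi)\xrightarrow{N\to\infty}0.$$
   Context: Conditions on $\sim$ (as $N\to\infty$): (C1) $\max_p\#\{(q,r,s)\in\{1,\dots,N\}^3:(p,q)\sim(r,s)\}=o(N^2)$; (C2) $\max_{p,q,r}\#\{s:(p,q)\sim(r,s)\}\le B<\infty$ with $B$ independent of $N$; (C3) $\#\{(p,q,r)\in\{1,\dots,N\}^3:(p,q)\sim(q,r),\ r\neq p\}=o(N^2)$. A pair-partition of $\{1,\dots,k\}$ is a partition all of whose blocks have exactly two elements; it is crossing if there exist $1\le a<b<c<d\le k$ with $\{a,c\},\{b,d\}\in\pi$. For a partition $\pi$ of $\{1,\dots,k\}$, $\mathcal E^{(N)}_k(\pi)$ is the set of $i=(i_1,\dots,i_k)\in\{1,\dots,N\}^k$ such that, with $i_{k+1}:=i_1$, for all $l,m$: $l,m$ lie in the same block of $\pi$ iff $(i_l,i_{l+1})\sim(i_m,i_{m+1})$. *)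

theory Defs
  imports Complex_Main "HOL-Library.Disjoint_Sets"
begin

definition cyc_next :: "nat \<Rightarrow> nat \<Rightarrow> nat" where
  "cyc_next k l = (if l = k then 1 else l + 1)"

definition pair_partition :: "nat \<Rightarrow> nat set set \<Rightarrow> bool" where
  "pair_partition k \<pi> \<longleftrightarrow> partition_on {1..k} \<pi> \<and> (\<forall>B\<in>\<pi>. card B = 2)"

definition crossing :: "nat \<Rightarrow> nat set set \<Rightarrow> bool" where
  "crossing k \<pi> \<longleftrightarrow> (\<exists>a b c d. 1 \<le> a \<and> a < b \<and> b < c \<and> c < d \<and> d \<le> k
      \<and> {a, c} \<in> \<pi> \<and> {b, d} \<in> \<pi>)"

text \<open>The set E_k^(N)(pi); tuples i are functions on {1..k} (extensional) with values in {1..N};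
  R N is the relation ~ on {1..N}^2 for the given N.\<close>
definition E_set :: "(nat \<Rightarrow> ((nat \<times> nat) \<times> (nat \<times> nat)) set) \<Rightarrow> nat \<Rightarrow> nat \<Rightarrow> nat set set
    \<Rightarrow> (nat \<Rightarrow> nat) set" where
  "E_set R N k \<pi> = {i \<in> {1..k} \<rightarrow>\<^sub>E {1..N}.
     \<forall>l\<in>{1..k}. \<forall>m\<in>{1..k}.
       (\<exists>B\<in>\<pi>. l \<in> B \<and> m \<in> B) \<longleftrightarrow> ((i l, i (cyc_next k l)), (i m, i (cyc_next k m))) \<in> R N}"

end

theory Submission
  imports Defs
begin

lemma card_image_factor:
  assumes "finite (\<phi> ` X)" "\<And>g g'. g \<in> X \<Longrightarrow> g' \<in> X \<Longrightarrow> \<phi> g = \<phi> g' \<Longrightarrow> f g = f g'"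
  shows "card (f ` X) \<le> card (\<phi> ` X)"
proof -
  have "f ` X = (\<lambda>y. f (SOME g. g \<in> X \<and> \<phi> g = y)) ` (\<phi> ` X)"
  proof (rule set_eqI, rule iffI)
    fix z assume "z \<in> f ` X" then obtain g where g: "g \<in> X" "z = f g" by auto
    let ?g = "SOME g'. g' \<in> X \<and> \<phi> g' = \<phi> g"
    have "?g \<in> X \<and> \<phi> ?g = \<phi> g" by (rule someI[of _ g]) (use g in auto)
    hence "f ?g = f g" using assms(2) g by metis
    thus "z \<in> (\<lambda>y. f (SOME g. g \<in> X \<and> \<phi> g = y)) ` (\<phi> ` X)" using g by force
  next
    fix z assume "z \<in> (\<lambda>y. f (SOME g. g \<in> X \<and> \<phi> g = y)) ` (\<phi> ` X)"
    then obtain g where g: "g \<in> X" "z = f (SOME g'. g' \<in> X \<and> \<phi> g' = \<phi> g)" by auto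
    let ?g = "SOME g'. g' \<in> X \<and> \<phi> g' = \<phi> g"
    have "?g \<in> X \<and> \<phi> ?g = \<phi> g" by (rule someI[of _ g]) (use g in auto)
    thus "z \<in> f ` X" using g by auto
  qed
  then show ?thesis using card_image_le assms(1) by metis
qed

lemma chain_count:
  fixes S :: "(nat \<Rightarrow> 'b) set" and U :: "nat \<Rightarrow> nat set" and c :: "nat \<Rightarrow> nat"
  assumes base: "card ((\<lambda>g. restrict g (U 0)) ` S) \<le> 1"
  shows "(\<And>t. t < n \<Longrightarrow> finite ((\<lambda>g. restrict g (U t)) ` S)) \<Longrightarrow>
    (\<And>t h. t < n \<Longrightarrow> card ((\<lambda>g. restrict g (U (Suc t))) ` {g\<in>S. restrict g (U t) = h}) \<le> c t)
    \<Longrightarrow> card ((\<lambda>g. restrict g (U n)) ` S) \<le> (\<Prod>t<n. c t)"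
proof (induction n)
  case 0 then show ?case using base by (metis lessThan_0 prod.empty)
next
  case (Suc n)
  let ?A = "(\<lambda>g. restrict g (U n)) ` S"
  have eq: "(\<lambda>g. restrict g (U (Suc n))) ` S = (\<Union>h\<in>?A. (\<lambda>g. restrict g (U (Suc n))) ` {g\<in>S. restrict g (U n) = h})" by auto
  have "card (\<Union>h\<in>?A. (\<lambda>g. restrict g (U (Suc n))) ` {g\<in>S. restrict g (U n) = h}) \<le> (\<Sum>h\<in>?A. card ((\<lambda>g. restrict g (U (Suc n))) ` {g\<in>S. restrict g (U n) = h}))"
    by (rule card_UN_le) (rule Suc.prems(1), simp)
  also have "\<dots> \<le> (\<Sum>h\<in>?A. c n)" by (rule sum_mono, rule Suc.prems(2), simp)
  also have "\<dots> = card ?A * c n" by simp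
  also have "\<dots> \<le> (\<Prod>t<n. c t) * c n"
  proof (rule mult_right_mono)
    show "card ?A \<le> (\<Prod>t<n. c t)"
      by (rule Suc.IH) (rule Suc.prems(1), simp, rule Suc.prems(2), simp)
  qed simp
  finally have X: "card (\<Union>h\<in>?A. (\<lambda>g. restrict g (U (Suc n))) ` {g\<in>S. restrict g (U n) = h}) \<le> (\<Prod>t<n. c t) * c n" .
  show ?case by (simp only: eq prod.lessThan_Suc X)
qed

definition invol :: "nat \<Rightarrow> (nat \<Rightarrow> nat) \<Rightarrow> bool" where
 "invol k p \<longleftrightarrow> (\<forall>l\<in>{1..k}. p l \<in> {1..k} \<and> p l \<noteq> l \<and> p (p l) = l)"

definition Fs :: "(nat \<Rightarrow> ((nat\<times>nat)\<times>(nat\<times>nat)) set) \<Rightarrow> nat \<Rightarrow> nat \<Rightarrow> (nat \<Rightarrow> nat) \<Rightarrow> (nat \<Rightarrow> nat) set" where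
 "Fs R N k p = {i \<in> {1..k} \<rightarrow>\<^sub>E {1..N}. \<forall>l\<in>{1..k}. ((i l, i (cyc_next k l)), (i (p l), i (cyc_next k (p l)))) \<in> R N}"

definition crossp :: "nat \<Rightarrow> (nat \<Rightarrow> nat) \<Rightarrow> bool" where
  "crossp k p \<longleftrightarrow> (\<exists>a b c d. 1 \<le> a \<and> a < b \<and> b < c \<and> c < d \<and> d \<le> k \<and> p a = c \<and> p b = d)"

definition Free :: "nat \<Rightarrow> (nat \<Rightarrow> nat) \<Rightarrow> nat set" where
  "Free k p = {t. t < k \<and> (t = 0 \<or> (1 \<le> t \<and> t < p t))}"

lemma card_Free:
  assumes inv: "invol k p" and k1: "1 \<le> k"
  shows "card (Free k p) = k div 2 + 1"
proof -
  define Op where "Op = {t\<in>{1..k}. t < p t}"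
  define Cl where "Cl = {t\<in>{1..k}. p t < t}"
  have pin: "\<And>t. t \<in> {1..k} \<Longrightarrow> p t \<in> {1..k} \<and> p t \<noteq> t \<and> p (p t) = t" using inv unfolding invol_def by simp
  have "inj_on p Op"
  proof (rule inj_onI)
    fix x y assume xy: "x \<in> Op" "y \<in> Op" "p x = p y"
    have "x = p (p x)" using pin[of x] xy(1) unfolding Op_def by simp
    also have "\<dots> = p (p y)" using xy(3) by (rule arg_cong)
    also have "\<dots> = y" using pin[of y] xy(2) unfolding Op_def by simp
    finally show "x = y" .
  qed
  moreover have "p ` Op = Cl"
  proof
    show "p ` Op \<subseteq> Cl"
    proof
      fix y assume "y \<in> p ` Op"
      then obtain x where x: "x \<in> Op" "y = p x" by blast
      then show "y \<in> Cl" using pin[of x] unfolding Op_def Cl_def by auto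
    qed
    show "Cl \<subseteq> p ` Op"
    proof
      fix t assume t: "t \<in> Cl"
      hence "p t \<in> Op" "t = p (p t)" unfolding Op_def Cl_def using pin[of t] by auto
      thus "t \<in> p ` Op" by blast
    qed
  qed
  ultimately have cOC: "card Op = card Cl" using card_image[of p Op] by simp
  have "Op \<union> Cl = {1..k}"
  proof
    show "Op \<union> Cl \<subseteq> {1..k}" unfolding Op_def Cl_def by auto
    show "{1..k} \<subseteq> Op \<union> Cl"
    proof
      fix t assume t: "t \<in> {1..k}"
      then have "p t \<noteq> t" using pin[of t] by blast
      then have "t < p t \<or> p t < t" by linarith
      then show "t \<in> Op \<union> Cl" unfolding Op_def Cl_def using t by blast
    qed
  qed
  moreover have "Op \<inter> Cl = {}" unfolding Op_def Cl_def by auto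
  moreover have "finite Op" "finite Cl" unfolding Op_def Cl_def by auto
  ultimately have "card Op + card Cl = k"
    using card_Un_disjoint[of Op Cl] by simp
  hence cO: "card Op = k div 2" using cOC by simp
  have "Free k p = insert 0 Op"
  proof
    show "Free k p \<subseteq> insert 0 Op" unfolding Free_def Op_def by auto
    show "insert 0 Op \<subseteq> Free k p"
    proof
      fix t assume "t \<in> insert 0 Op"
      then consider "t = 0" | "t \<in> Op" by blast
      then show "t \<in> Free k p"
      proof cases
        case 1 then show ?thesis using k1 unfolding Free_def by simp
      next
        case 2 then have "t \<in> {1..k}" "t < p t" "p t \<le> k" unfolding Op_def using pin[of t] by auto
        then show ?thesis unfolding Free_def by auto
      qed
    qed
  qed
  moreover have "0 \<notin> Op" unfolding Op_def by auto
  moreover have "finite Op" unfolding Op_def by auto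
  ultimately show ?thesis using cO by (simp add: card_insert_if)
qed



context
  fixes R :: "nat \<Rightarrow> ((nat \<times> nat) \<times> (nat \<times> nat)) set" and B :: nat
  assumes C2: "\<And>N p q r. p \<in> {1..N} \<Longrightarrow> q \<in> {1..N} \<Longrightarrow> r \<in> {1..N} \<Longrightarrow>
      card {s \<in> {1..N}. ((p, q), (r, s)) \<in> R N} \<le> B"
    and B1: "1 \<le> B"
begin

lemma master:
  assumes inv: "invol k p" and SF: "S \<subseteq> Fs R N k p"
   and sk: "s < k" and G: "G \<subseteq> {Suc s..k}" "Suc s \<in> G"
   and grp: "\<And>h. card ((\<lambda>g. restrict g G) ` {g\<in>S. restrict g {1..s} = h}) \<le> K"
  shows "card S \<le> K * N ^ card {t \<in> Free k p. Suc t \<notin> G} * B ^ k"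
proof -
  define U where "U t = {1..t} \<union> (if s < t then G else {})" for t
  define T where "T = {t \<in> Free k p. Suc t \<notin> G}"
  define c where "c t = (if t = s then K else if Suc t \<in> G then 1 else if t \<in> Free k p then N else B)" for t
  have pin: "\<And>t. t \<in> {1..k} \<Longrightarrow> p t \<in> {1..k} \<and> p t \<noteq> t \<and> p (p t) = t"
    using inv unfolding invol_def by simp
  have Sext: "\<And>g. g \<in> S \<Longrightarrow> g \<in> {1..k} \<rightarrow>\<^sub>E {1..N}" using SF unfolding Fs_def by auto
  have Sval: "\<And>g x. g \<in> S \<Longrightarrow> x \<in> {1..k} \<Longrightarrow> g x \<in> {1..N}" using Sext by (auto simp: PiE_iff)
  have Scon: "\<And>g l. g \<in> S \<Longrightarrow> l \<in> {1..k} \<Longrightarrow>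
      ((g l, g (cyc_next k l)), (g (p l), g (cyc_next k (p l)))) \<in> R N"
    using SF unfolding Fs_def by auto
  have Uk: "U t \<subseteq> {1..k}" if "t \<le> k" for t using G that unfolding U_def by auto
  have finR: "finite ((\<lambda>g. restrict g V) ` X)" if "V \<subseteq> {1..k}" "X \<subseteq> S" for V X
  proof (rule finite_subset)
    show "(\<lambda>g. restrict g V) ` X \<subseteq> V \<rightarrow>\<^sub>E {1..N}"
    proof (rule image_subsetI)
      fix g assume "g \<in> X"
      then have "\<forall>x\<in>V. g x \<in> {1..N}" using Sval that by blast
      then show "restrict g V \<in> V \<rightarrow>\<^sub>E {1..N}" by simp
    qed
    show "finite (V \<rightarrow>\<^sub>E {1..N})" using that by (intro finite_PiE) (auto intro: finite_subset)
  qed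
  have fin: "finite ((\<lambda>g. restrict g (U t)) ` S)" if "t < k" for t
    using finR[of "U t" S] Uk[of t] that by simp
  have base: "card ((\<lambda>g. restrict g (U 0)) ` S) \<le> 1"
  proof -
    have "(\<lambda>g. restrict g (U 0)) ` S \<subseteq> {\<lambda>x. undefined}" unfolding U_def by (auto simp: restrict_def)
    then have "card ((\<lambda>g. restrict g (U 0)) ` S) \<le> card {\<lambda>x::nat. undefined::nat}" by (rule card_mono[rotated]) simp
    then show ?thesis by simp
  qed
  have step: "card ((\<lambda>g. restrict g (U (Suc t))) ` {g\<in>S. restrict g (U t) = h}) \<le> c t" if t: "t < k" for t h
  proof -
    let ?X = "{g\<in>S. restrict g (U t) = h}"
    have agree: "g x = g' x" if "g \<in> ?X" "g' \<in> ?X" "x \<in> U t" for g g' x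
    proof -
      have "restrict g (U t) x = restrict g' (U t) x" using that by simp
      then show ?thesis using that(3) by simp
    qed
    consider (a) "t = s" | (b) "t \<noteq> s" "Suc t \<in> G" | (c) "t \<noteq> s" "Suc t \<notin> G" by blast
    then show ?thesis
    proof cases
      case a
      have US: "U (Suc t) = {1..s} \<union> G" "U t = {1..s}" using a G unfolding U_def by (auto simp: le_Suc_eq)
      have "card ((\<lambda>g. restrict g (U (Suc t))) ` ?X) \<le> card ((\<lambda>g. restrict g G) ` ?X)"
      proof (rule card_image_factor)
        have "G \<subseteq> {1..k}" using G by auto
        then show "finite ((\<lambda>g. restrict g G) ` ?X)" using finR[of G ?X] by blast
        fix g g' assume gg: "g \<in> ?X" "g' \<in> ?X" "restrict g G = restrict g' G"
        show "restrict g (U (Suc t)) = restrict g' (U (Suc t))"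
        proof
          fix x
          show "restrict g (U (Suc t)) x = restrict g' (U (Suc t)) x"
          proof (cases "x \<in> G")
            case True
            then have "restrict g G x = restrict g' G x" using gg(3) by simp
            then show ?thesis using True by (simp add: US)
          next
            case False
            then show ?thesis using agree[OF gg(1,2)] US by (auto simp: restrict_def)
          qed
        qed
      qed
      also have "\<dots> \<le> K" using grp[of h] US a by simp
      finally show ?thesis unfolding c_def using a by simp
    next
      case b
      then have "s < t" using G by auto
      then have "U (Suc t) = U t" using b unfolding U_def by (auto simp: le_Suc_eq)
      then have "(\<lambda>g. restrict g (U (Suc t))) ` ?X \<subseteq> {h}" by auto
      then have "card ((\<lambda>g. restrict g (U (Suc t))) ` ?X) \<le> card {h}" by (rule card_mono[rotated]) simp
      then show ?thesis unfolding c_def using b by simp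
    next
      case c
      have US: "U (Suc t) = insert (Suc t) (U t)" using c unfolding U_def by (auto simp: le_Suc_eq)
      have "card ((\<lambda>g. restrict g (U (Suc t))) ` ?X) \<le> card ((\<lambda>g. g (Suc t)) ` ?X)"
      proof (rule card_image_factor)
        have "(\<lambda>g. g (Suc t)) ` ?X \<subseteq> {1..N}" using Sval t by auto
        then show "finite ((\<lambda>g. g (Suc t)) ` ?X)" by (rule finite_subset) simp
        fix g g' assume gg: "g \<in> ?X" "g' \<in> ?X" "g (Suc t) = g' (Suc t)"
        show "restrict g (U (Suc t)) = restrict g' (U (Suc t))"
          using agree[OF gg(1,2)] gg(3) US by (auto simp: restrict_def fun_eq_iff)
      qed
      also have "\<dots> \<le> c t"
      proof (cases "t \<in> Free k p")
        case True
        have "(\<lambda>g. g (Suc t)) ` ?X \<subseteq> {1..N}" using Sval t by auto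
        then have "card ((\<lambda>g. g (Suc t)) ` ?X) \<le> card {1..N}" by (rule card_mono[rotated]) simp
        then show ?thesis unfolding c_def using c True by simp
      next
        case False
        note nf = False
        then have t1: "1 \<le> t" "\<not> t < p t" using t unfolding Free_def by auto
        then have tk: "t \<in> {1..k}" using t by auto
        then have pt: "p t < t" "p t \<in> {1..k}" "p (p t) = t" using pin[OF tk] t1 by auto
        show ?thesis
        proof (cases "?X = {}")
          case True then show ?thesis by (simp only: True image_empty card.empty)
        next
          case False
          then obtain g0 where g0: "g0 \<in> ?X" by blast
          have "(\<lambda>g. g (Suc t)) ` ?X \<subseteq> {x \<in> {1..N}. ((g0 (p t), g0 (Suc (p t))), (g0 t, x)) \<in> R N}"
          proof
            fix y assume "y \<in> (\<lambda>g. g (Suc t)) ` ?X"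
            then obtain g where g: "g \<in> ?X" "y = g (Suc t)" by auto
            have inU: "p t \<in> U t" "Suc (p t) \<in> U t" "t \<in> U t" using pt t1 unfolding U_def by auto
            have "((g (p t), g (cyc_next k (p t))), (g t, g (cyc_next k t))) \<in> R N"
              using Scon[of g "p t"] g(1) pt(2,3) by simp
            moreover have "cyc_next k (p t) = Suc (p t)" "cyc_next k t = Suc t"
              using pt t unfolding cyc_next_def by auto
            ultimately have "((g (p t), g (Suc (p t))), (g t, g (Suc t))) \<in> R N" by simp
            moreover have "g (p t) = g0 (p t)" "g (Suc (p t)) = g0 (Suc (p t))" "g t = g0 t"
              using agree[OF g(1) g0] inU by auto
            moreover have "g (Suc t) \<in> {1..N}" using Sval g t by auto
            ultimately show "y \<in> {x \<in> {1..N}. ((g0 (p t), g0 (Suc (p t))), (g0 t, x)) \<in> R N}" using g by simp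
          qed
          then have "card ((\<lambda>g. g (Suc t)) ` ?X) \<le> card {x \<in> {1..N}. ((g0 (p t), g0 (Suc (p t))), (g0 t, x)) \<in> R N}"
            by (rule card_mono[rotated]) simp
          also have "\<dots> \<le> B"
            by (rule C2) (use g0 Sval pt tk t in auto)
          finally show ?thesis unfolding c_def using c nf by simp
        qed
      qed
      finally show ?thesis .
    qed
  qed
  have "card ((\<lambda>g. restrict g (U k)) ` S) \<le> (\<Prod>t<k. c t)"
    by (rule chain_count[where U=U and S=S and n=k and c=c, OF base]) (rule fin, simp, rule step, simp)
  moreover have "(\<lambda>g. restrict g (U k)) ` S = S"
  proof -
    have Ukk: "U k = {1..k}" using G sk unfolding U_def by auto
    have "(\<lambda>g. restrict g (U k)) ` S = (\<lambda>g. g) ` S"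
      by (rule image_cong) (use Sext Ukk PiE_restrict in metis)+
    then show ?thesis by simp
  qed
  moreover have "(\<Prod>t<k. c t) \<le> K * N ^ card T * B ^ k"
  proof -
    have "(\<Prod>t<k. c t) \<le> (\<Prod>t<k. (if t = s then K else 1) * ((if t \<in> T then N else 1) * B))"
    proof (rule prod_mono)
      fix t assume "t \<in> {..<k}"
      show "0 \<le> c t \<and> c t \<le> (if t = s then K else 1) * ((if t \<in> T then N else 1) * B)"
      proof (cases "t = s")
        case True
        then have "t \<notin> T" using G unfolding T_def by auto
        then show ?thesis using True B1 unfolding c_def by simp
      next
        case False
        then show ?thesis using B1 unfolding c_def T_def by auto
      qed
    qed
    also have "\<dots> = (\<Prod>t<k. if t = s then K else 1) * ((\<Prod>t<k. if t \<in> T then N else 1) * B ^ k)"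
      by (simp add: prod.distrib)
    also have "(\<Prod>t<k. if t = s then K else 1) = K" using sk by simp
    also have "(\<Prod>t<k. if t \<in> T then N else 1) = N ^ card T"
    proof -
      have "T \<subseteq> {..<k}" unfolding T_def Free_def by auto
      then have "{..<k} \<inter> {x. x \<in> T} = T" by auto
      then show ?thesis by (simp add: prod.If_cases)
    qed
    finally show ?thesis by simp
  qed
  ultimately show ?thesis by (simp add: T_def)
qed

end


definition M1 :: "(nat \<Rightarrow> ((nat \<times> nat) \<times> (nat \<times> nat)) set) \<Rightarrow> nat \<Rightarrow> nat" where
  "M1 R N = Max ((\<lambda>p. card {(q, r, s). q \<in> {1..N} \<and> r \<in> {1..N} \<and> s \<in> {1..N}
                 \<and> ((p, q), (r, s)) \<in> R N}) ` {1..N})"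

definition C3c :: "(nat \<Rightarrow> ((nat \<times> nat) \<times> (nat \<times> nat)) set) \<Rightarrow> nat \<Rightarrow> nat" where
  "C3c R N = card {(p, q, r). p \<in> {1..N} \<and> q \<in> {1..N} \<and> r \<in> {1..N}
                 \<and> ((p, q), (q, r)) \<in> R N \<and> r \<noteq> p}"

lemma Fs_val: "g \<in> Fs R N k p \<Longrightarrow> x \<in> {1..k} \<Longrightarrow> g x \<in> {1..N}"
  unfolding Fs_def by (auto simp: PiE_iff)

lemma Fs_con: "g \<in> Fs R N k p \<Longrightarrow> l \<in> {1..k} \<Longrightarrow>
      ((g l, g (cyc_next k l)), (g (p l), g (cyc_next k (p l)))) \<in> R N"
  unfolding Fs_def by auto

lemma finite_triples: "finite {(q, r, s). q \<in> {1..N::nat} \<and> r \<in> {1..N} \<and> s \<in> {1..N} \<and> P q r s}"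
proof (rule finite_subset)
  show "{(q, r, s). q \<in> {1..N::nat} \<and> r \<in> {1..N} \<and> s \<in> {1..N} \<and> P q r s} \<subseteq> {1..N} \<times> {1..N} \<times> {1..N}" by auto
qed simp

context
  fixes R :: "nat \<Rightarrow> ((nat \<times> nat) \<times> (nat \<times> nat)) set" and B :: nat
  assumes C2: "\<And>N p q r. p \<in> {1..N} \<Longrightarrow> q \<in> {1..N} \<Longrightarrow> r \<in> {1..N} \<Longrightarrow>
      card {s \<in> {1..N}. ((p, q), (r, s)) \<in> R N} \<le> B"
    and B1: "1 \<le> B"
begin

lemma boundB:
  assumes inv: "invol k p" and l: "1 \<le> l" "Suc l < m" "m < k" "p l = m" "p m = l"
    and op: "m - 1 < p (m - 1)"
  shows "card (Fs R N k p) \<le> M1 R N * N ^ (k div 2 - 1) * B ^ k"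
proof -
  let ?S = "Fs R N k p"
  let ?G = "{Suc l, m, Suc m}"
  have "card ?S \<le> M1 R N * N ^ card {t \<in> Free k p. Suc t \<notin> ?G} * B ^ k"
  proof (rule master[OF C2 B1 inv])
    show "?S \<subseteq> Fs R N k p" by simp
    show "l < k" "?G \<subseteq> {Suc l..k}" "Suc l \<in> ?G" using l by auto
    fix h
    let ?X = "{g \<in> ?S. restrict g {1..l} = h}"
    show "card ((\<lambda>g. restrict g ?G) ` ?X) \<le> M1 R N"
    proof (cases "?X = {}")
      case True then show ?thesis by (simp only: True image_empty card.empty)
    next
      case False
      then obtain g0 where g0: "g0 \<in> ?X" by blast
      let ?C = "{(q, r, s). q \<in> {1..N} \<and> r \<in> {1..N} \<and> s \<in> {1..N} \<and> ((g0 l, q), (r, s)) \<in> R N}"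
      have "card ((\<lambda>g. restrict g ?G) ` ?X) \<le> card ((\<lambda>g. (g (Suc l), g m, g (Suc m))) ` ?X)"
      proof (rule card_image_factor)
        have "(\<lambda>g. (g (Suc l), g m, g (Suc m))) ` ?X \<subseteq> ?C"
        proof
          fix y assume "y \<in> (\<lambda>g. (g (Suc l), g m, g (Suc m))) ` ?X"
          then obtain g where g: "g \<in> ?X" "y = (g (Suc l), g m, g (Suc m))" by auto
          have "g l = g0 l"
          proof -
            have "restrict g {1..l} l = restrict g0 {1..l} l" using g(1) g0 by simp
            then show ?thesis using l by simp
          qed
          moreover have "((g l, g (cyc_next k l)), (g (p l), g (cyc_next k (p l)))) \<in> R N"
            using Fs_con[of g R N k p l] g(1) l by simp
          moreover have "cyc_next k l = Suc l" "cyc_next k m = Suc m" using l unfolding cyc_next_def by auto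
          moreover have "g (Suc l) \<in> {1..N}" "g m \<in> {1..N}" "g (Suc m) \<in> {1..N}"
            using Fs_val[of g R N k p] g(1) l by auto
          ultimately show "y \<in> ?C" using g(2) l by simp
        qed
        then show "finite ((\<lambda>g. (g (Suc l), g m, g (Suc m))) ` ?X)"
          by (rule finite_subset) (rule finite_triples)
        fix g g' assume "(g (Suc l), g m, g (Suc m)) = (g' (Suc l), g' m, g' (Suc m))"
        then show "restrict g ?G = restrict g' ?G" by (auto simp: restrict_def fun_eq_iff)
      qed
      also have "\<dots> \<le> card ?C"
      proof (rule card_mono)
        show "finite ?C" by (rule finite_triples)
        show "(\<lambda>g. (g (Suc l), g m, g (Suc m))) ` ?X \<subseteq> ?C"
        proof
          fix y assume "y \<in> (\<lambda>g. (g (Suc l), g m, g (Suc m))) ` ?X"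
          then obtain g where g: "g \<in> ?X" "y = (g (Suc l), g m, g (Suc m))" by auto
          have "g l = g0 l"
          proof -
            have "restrict g {1..l} l = restrict g0 {1..l} l" using g(1) g0 by simp
            then show ?thesis using l by simp
          qed
          moreover have "((g l, g (cyc_next k l)), (g (p l), g (cyc_next k (p l)))) \<in> R N"
            using Fs_con[of g R N k p l] g(1) l by simp
          moreover have "cyc_next k l = Suc l" "cyc_next k m = Suc m" using l unfolding cyc_next_def by auto
          moreover have "g (Suc l) \<in> {1..N}" "g m \<in> {1..N}" "g (Suc m) \<in> {1..N}"
            using Fs_val[of g R N k p] g(1) l by auto
          ultimately show "y \<in> ?C" using g(2) l by simp
        qed
      qed
      also have "\<dots> \<le> M1 R N" unfolding M1_def
      proof (rule Max_ge)
        show "finite ((\<lambda>p. card {(q, r, s). q \<in> {1..N} \<and> r \<in> {1..N} \<and> s \<in> {1..N} \<and> ((p, q), (r, s)) \<in> R N}) ` {1..N})" by simp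
        have "g0 l \<in> {1..N}" using Fs_val[of g0 R N k p l] g0 l by auto
        then show "card ?C \<in> (\<lambda>p. card {(q, r, s). q \<in> {1..N} \<and> r \<in> {1..N} \<and> s \<in> {1..N} \<and> ((p, q), (r, s)) \<in> R N}) ` {1..N}" by blast
      qed
      finally show ?thesis .
    qed
  qed
  moreover have "card {t \<in> Free k p. Suc t \<notin> ?G} = k div 2 - 1"
  proof -
    have mF: "m \<notin> Free k p" using l unfolding Free_def by auto
    have "{t \<in> Free k p. Suc t \<notin> ?G} = Free k p - {l, m - 1}"
      using mF l by auto
    moreover have "l \<in> Free k p" "m - 1 \<in> Free k p" using l op unfolding Free_def by auto
    moreover have "l \<noteq> m - 1" using l by auto
    moreover have "finite (Free k p)" unfolding Free_def by auto
    ultimately show ?thesis using card_Free[OF inv] l by (simp add: card_Diff_subset)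
  qed
  ultimately show ?thesis by simp
qed

lemma boundA1:
  assumes inv: "invol k p" and l: "1 \<le> l" "Suc (Suc l) \<le> k" "p l = Suc l" "p (Suc l) = l"
    and fr: "l = 1 \<or> l - 1 < p (l - 1)"
  shows "card {i \<in> Fs R N k p. i (Suc (Suc l)) \<noteq> i l} \<le> C3c R N * N ^ (k div 2 - 1) * B ^ k"
proof -
  let ?S = "{i \<in> Fs R N k p. i (Suc (Suc l)) \<noteq> i l}"
  let ?G = "{l, Suc l, Suc (Suc l)}"
  have "card ?S \<le> C3c R N * N ^ card {t \<in> Free k p. Suc t \<notin> ?G} * B ^ k"
  proof (rule master[OF C2 B1 inv])
    show "?S \<subseteq> Fs R N k p" by auto
    show "l - 1 < k" "?G \<subseteq> {Suc (l - 1)..k}" "Suc (l - 1) \<in> ?G" using l by auto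
    fix h
    let ?X = "{g \<in> ?S. restrict g {1..l - 1} = h}"
    let ?C = "{(p, q, r). p \<in> {1..N} \<and> q \<in> {1..N} \<and> r \<in> {1..N} \<and> ((p, q), (q, r)) \<in> R N \<and> r \<noteq> p}"
    have sub: "(\<lambda>g. (g l, g (Suc l), g (Suc (Suc l)))) ` ?X \<subseteq> ?C"
    proof
      fix y assume "y \<in> (\<lambda>g. (g l, g (Suc l), g (Suc (Suc l)))) ` ?X"
      then obtain g where g: "g \<in> ?X" "y = (g l, g (Suc l), g (Suc (Suc l)))" by auto
      have "((g l, g (cyc_next k l)), (g (p l), g (cyc_next k (p l)))) \<in> R N"
        using Fs_con[of g R N k p l] g(1) l by simp
      moreover have "cyc_next k l = Suc l" "cyc_next k (Suc l) = Suc (Suc l)" using l unfolding cyc_next_def by auto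
      moreover have "g l \<in> {1..N}" "g (Suc l) \<in> {1..N}" "g (Suc (Suc l)) \<in> {1..N}"
        using Fs_val[of g R N k p] g(1) l by auto
      ultimately show "y \<in> ?C" using g l by simp
    qed
    have "card ((\<lambda>g. restrict g ?G) ` ?X) \<le> card ((\<lambda>g. (g l, g (Suc l), g (Suc (Suc l)))) ` ?X)"
    proof (rule card_image_factor)
      show "finite ((\<lambda>g. (g l, g (Suc l), g (Suc (Suc l)))) ` ?X)"
        using sub by (rule finite_subset) (rule finite_triples)
      fix g g' assume "(g l, g (Suc l), g (Suc (Suc l))) = (g' l, g' (Suc l), g' (Suc (Suc l)))"
      then show "restrict g ?G = restrict g' ?G" by (auto simp: restrict_def fun_eq_iff)
    qed
    also have "\<dots> \<le> card ?C" using sub by (rule card_mono[rotated]) (rule finite_triples)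
    also have "\<dots> = C3c R N" unfolding C3c_def by simp
    finally show "card ((\<lambda>g. restrict g ?G) ` ?X) \<le> C3c R N" .
  qed
  moreover have "card {t \<in> Free k p. Suc t \<notin> ?G} = k div 2 - 1"
  proof -
    have mF: "Suc l \<notin> Free k p" using l unfolding Free_def by auto
    have "{t \<in> Free k p. Suc t \<notin> ?G} = Free k p - {l - 1, l}"
      using mF l by auto
    moreover have "l \<in> Free k p" "l - 1 \<in> Free k p" using l fr unfolding Free_def by auto
    moreover have "l - 1 \<noteq> l" using l by auto
    moreover have "finite (Free k p)" unfolding Free_def by auto
    ultimately show ?thesis using card_Free[OF inv] l by (simp add: card_Diff_subset)
  qed
  ultimately show ?thesis by simp
qed

end


definition sg :: "nat \<Rightarrow> nat \<Rightarrow> nat" where "sg l t = (if t < l then t else t + 2)"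
definition sgi :: "nat \<Rightarrow> nat \<Rightarrow> nat" where "sgi l t = (if t < l then t else t - 2)"
definition pc :: "nat \<Rightarrow> (nat \<Rightarrow> nat) \<Rightarrow> nat \<Rightarrow> nat" where "pc l p t = sgi l (p (sg l t))"
definition colv :: "nat \<Rightarrow> nat \<Rightarrow> (nat \<Rightarrow> nat) \<Rightarrow> nat \<Rightarrow> nat" where
  "colv k l i t = (if t \<in> {1..k-2} then i (if t \<le> l then t else t + 2) else undefined)"

lemma sgi_sg: "sgi l (sg l t) = t" unfolding sg_def sgi_def by auto
lemma sg_sgi: "v \<noteq> l \<Longrightarrow> v \<noteq> Suc l \<Longrightarrow> sg l (sgi l v) = v" unfolding sg_def sgi_def by auto
lemma sg_ne: "sg l t \<noteq> l" "sg l t \<noteq> Suc l" unfolding sg_def by auto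
lemma sg_range: "1 \<le> t \<Longrightarrow> t \<le> k - 2 \<Longrightarrow> 2 \<le> k \<Longrightarrow> sg l t \<in> {1..k}" unfolding sg_def by auto
lemma sgi_range: "v \<in> {1..k} \<Longrightarrow> v \<noteq> l \<Longrightarrow> v \<noteq> Suc l \<Longrightarrow> 1 \<le> l \<Longrightarrow> Suc (Suc l) \<le> k \<Longrightarrow>
   sgi l v \<in> {1..k-2}" unfolding sgi_def by auto
lemma sgi_mono: "x < y \<Longrightarrow> x \<noteq> l \<Longrightarrow> x \<noteq> Suc l \<Longrightarrow> y \<noteq> l \<Longrightarrow> y \<noteq> Suc l \<Longrightarrow> sgi l x < sgi l y"
  unfolding sgi_def by auto

lemma Fs_finite: "finite (Fs R N k' q)"
proof (rule finite_subset)
  show "Fs R N k' q \<subseteq> {1..k'} \<rightarrow>\<^sub>E {1..N}" unfolding Fs_def by auto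
qed (simp add: finite_PiE)

context
  fixes k l :: nat and p :: "nat \<Rightarrow> nat"
  assumes inv: "invol k p" and l: "1 \<le> l" "Suc (Suc l) \<le> k" "p l = Suc l"
begin

lemma pin: "t \<in> {1..k} \<Longrightarrow> p t \<in> {1..k} \<and> p t \<noteq> t \<and> p (p t) = t"
  using inv unfolding invol_def by simp

lemma pSl: "p (Suc l) = l"
proof -
  have "p (p l) = l" using pin[of l] l by simp
  then show ?thesis using l(3) by simp
qed

lemma p_avoid: assumes "u \<in> {1..k}" "u \<noteq> l" "u \<noteq> Suc l" shows "p u \<noteq> l" "p u \<noteq> Suc l"
proof -
  have pp: "p (p u) = u" using pin[OF assms(1)] by simp
  show "p u \<noteq> l"
  proof
    assume "p u = l" then have "p (p u) = Suc l" using l(3) by simp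
    then show False using pp assms(3) by simp
  qed
  show "p u \<noteq> Suc l"
  proof
    assume "p u = Suc l" then have "p (p u) = l" using pSl by simp
    then show False using pp assms(2) by simp
  qed
qed

lemma pc_facts: assumes t: "t \<in> {1..k-2}"
  shows "pc l p t \<in> {1..k-2}" "sg l (pc l p t) = p (sg l t)" "pc l p t \<noteq> t" "pc l p (pc l p t) = t"
proof -
  let ?u = "sg l t"
  have u: "?u \<in> {1..k}" "?u \<noteq> l" "?u \<noteq> Suc l" using sg_range[of t k l] sg_ne t l by auto
  have pu: "p ?u \<in> {1..k}" "p ?u \<noteq> ?u" "p (p ?u) = ?u" using pin[OF u(1)] by auto
  have pa: "p ?u \<noteq> l" "p ?u \<noteq> Suc l" using p_avoid[OF u] by auto
  show "pc l p t \<in> {1..k-2}" unfolding pc_def using sgi_range[OF pu(1) pa l(1,2)] .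
  show sgpc: "sg l (pc l p t) = p (sg l t)" unfolding pc_def using sg_sgi[OF pa] .
  show "pc l p t \<noteq> t"
  proof
    assume "pc l p t = t"
    then have "sg l (pc l p t) = ?u" by simp
    then show False using sgpc pu(2) by simp
  qed
  show "pc l p (pc l p t) = t"
  proof -
    have "pc l p (pc l p t) = sgi l (p (sg l (pc l p t)))" unfolding pc_def ..
    also have "\<dots> = sgi l (p (p ?u))" using sgpc by simp
    also have "\<dots> = sgi l ?u" using pu(3) by simp
    also have "\<dots> = t" by (rule sgi_sg)
    finally show ?thesis .
  qed
qed

lemma invol_pc: "invol (k - 2) (pc l p)"
  unfolding invol_def using pc_facts by blast

lemma crossp_pc: assumes "crossp k p" shows "crossp (k - 2) (pc l p)"
proof -
  obtain a b c d where abcd: "1 \<le> a" "a < b" "b < c" "c < d" "d \<le> k" "p a = c" "p b = d"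
    using assms unfolding crossp_def by blast
  have pc': "p c = a" using pin[of a] abcd by auto
  have pd': "p d = b" using pin[of b] abcd by auto
  have na: "a \<noteq> l" "a \<noteq> Suc l"
  proof
    assume "a = l" then have "c = Suc l" using abcd l by simp
    then show False using abcd \<open>a = l\<close> by simp
  next
    show "a \<noteq> Suc l"
    proof
      assume "a = Suc l" then have "c = l" using abcd pSl by simp
      then show False using abcd \<open>a = Suc l\<close> by simp
    qed
  qed
  have nb: "b \<noteq> l" "b \<noteq> Suc l"
  proof
    assume "b = l" then have "d = Suc l" using abcd l by simp
    then show False using abcd \<open>b = l\<close> by simp
  next
    show "b \<noteq> Suc l"
    proof
      assume "b = Suc l" then have "d = l" using abcd pSl by simp
      then show False using abcd \<open>b = Suc l\<close> by simp
    qed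
  qed
  have nc: "c \<noteq> l" "c \<noteq> Suc l"
  proof
    assume "c = l" then have "a = Suc l" using pc' l by simp
    then show False using abcd \<open>c = l\<close> by simp
  next
    show "c \<noteq> Suc l"
    proof
      assume "c = Suc l" then have "a = l" using pc' pSl by simp
      then show False using abcd \<open>c = Suc l\<close> by simp
    qed
  qed
  have nd: "d \<noteq> l" "d \<noteq> Suc l"
  proof
    assume "d = l" then have "b = Suc l" using pd' l by simp
    then show False using abcd \<open>d = l\<close> by simp
  next
    show "d \<noteq> Suc l"
    proof
      assume "d = Suc l" then have "b = l" using pd' pSl by simp
      then show False using abcd \<open>d = Suc l\<close> by simp
    qed
  qed
  have ab: "sgi l a < sgi l b" "sgi l b < sgi l c" "sgi l c < sgi l d"
    using sgi_mono na nb nc nd abcd by auto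
  have ra: "sgi l a \<in> {1..k-2}" using sgi_range[of a k l] na abcd l by auto
  have rd: "sgi l d \<in> {1..k-2}" using sgi_range[of d k l] nd abcd l by auto
  have "pc l p (sgi l a) = sgi l c" unfolding pc_def using sg_sgi[OF na] abcd by simp
  moreover have "pc l p (sgi l b) = sgi l d" unfolding pc_def using sg_sgi[OF nb] abcd by simp
  ultimately show ?thesis unfolding crossp_def using ab ra rd
    by (intro exI[of _ "sgi l a"] exI[of _ "sgi l b"] exI[of _ "sgi l c"] exI[of _ "sgi l d"]) auto
qed

lemma edge_col:
  assumes i0: "i (Suc (Suc l)) = i l" and t: "t \<in> {1..k-2}"
  shows "(colv k l i t, colv k l i (cyc_next (k - 2) t)) = (i (sg l t), i (cyc_next k (sg l t)))"
proof -
  have cn: "cyc_next (k-2) t \<in> {1..k-2}" using t unfolding cyc_next_def by auto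
  have c1: "colv k l i t = i (if t \<le> l then t else t + 2)" using t unfolding colv_def by simp
  have c2: "colv k l i (cyc_next (k - 2) t) = i (if cyc_next (k-2) t \<le> l then cyc_next (k-2) t else cyc_next (k-2) t + 2)"
    using cn unfolding colv_def by simp
  have tt: "1 \<le> t" "t \<le> k - 2" using t by auto
  consider (a) "t < l" | (b) "t = l" "l = k - 2" | (c) "t = l" "l < k - 2" | (d) "l < t" "t = k - 2" | (e) "l < t" "t < k - 2"
    using tt l by linarith
  then show ?thesis
  proof cases
    case a then show ?thesis using c1 c2 l t unfolding sg_def cyc_next_def by auto
  next
    case b
    have kk: "k = Suc (Suc l)" using b l by linarith
    have sgt: "sg l t = Suc (Suc l)" unfolding sg_def using b by simp
    have cc1: "cyc_next (k-2) t = 1" unfolding cyc_next_def using b by simp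
    have cc2: "cyc_next k (Suc (Suc l)) = 1" unfolding cyc_next_def using kk by simp
    note cc = cc1 cc2
    have e1: "colv k l i t = i l" using c1 b(1) by simp
    have e2: "colv k l i (cyc_next (k-2) t) = i 1" using c2 cc(1) l(1) by simp
    show ?thesis unfolding e1 e2 sgt cc(2) using i0 by simp
  next
    case c then show ?thesis using c1 c2 l t i0 unfolding sg_def cyc_next_def by auto
  next
    case d then show ?thesis using c1 c2 l t unfolding sg_def cyc_next_def by auto
  next
    case e then show ?thesis using c1 c2 l t unfolding sg_def cyc_next_def by auto
  qed
qed

lemma colv_Fs:
  assumes i: "i \<in> Fs R N k p" and i0: "i (Suc (Suc l)) = i l"
  shows "colv k l i \<in> Fs R N (k - 2) (pc l p)"
  unfolding Fs_def
proof (intro CollectI conjI ballI)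
  show "colv k l i \<in> {1..k - 2} \<rightarrow>\<^sub>E {1..N}"
  proof (rule PiE_I)
    fix t assume t: "t \<in> {1..k-2}"
    then have "(if t \<le> l then t else t + 2) \<in> {1..k}" by auto
    then show "colv k l i t \<in> {1..N}" using t Fs_val[OF i] unfolding colv_def by simp
  next
    fix t assume nt: "t \<notin> {1..k-2}" then show "colv k l i t = undefined" unfolding colv_def by (rule if_not_P)
  qed
  fix t assume t: "t \<in> {1..k-2}"
  have ptt: "pc l p t \<in> {1..k-2}" "sg l (pc l p t) = p (sg l t)" using pc_facts[OF t] by auto
  have st: "sg l t \<in> {1..k}" using sg_range[of t k l] t l by auto
  have "((i (sg l t), i (cyc_next k (sg l t))), (i (p (sg l t)), i (cyc_next k (p (sg l t))))) \<in> R N"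
    using Fs_con[OF i st] .
  then show "((colv k l i t, colv k l i (cyc_next (k - 2) t)),
          (colv k l i (pc l p t), colv k l i (cyc_next (k - 2) (pc l p t)))) \<in> R N"
    using edge_col[OF i0 t] edge_col[OF i0 ptt(1)] ptt(2) by simp
qed

lemma collapse_card:
  "card {i \<in> Fs R N k p. i (Suc (Suc l)) = i l} \<le> N * card (Fs R N (k - 2) (pc l p))"
proof -
  let ?S = "{i \<in> Fs R N k p. i (Suc (Suc l)) = i l}"
  let ?\<phi> = "\<lambda>i. (colv k l i, i (Suc l))"
  have sub: "?\<phi> ` ?S \<subseteq> Fs R N (k - 2) (pc l p) \<times> {1..N}"
  proof
    fix y assume "y \<in> ?\<phi> ` ?S"
    then obtain i where i: "i \<in> ?S" "y = ?\<phi> i" by blast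
    have "Suc l \<in> {1..k}" using l by auto
    then show "y \<in> Fs R N (k - 2) (pc l p) \<times> {1..N}" using i colv_Fs Fs_val by auto
  qed
  have "card ((\<lambda>i. i) ` ?S) \<le> card (?\<phi> ` ?S)"
  proof (rule card_image_factor)
    show "finite (?\<phi> ` ?S)" using sub by (rule finite_subset) (simp add: Fs_finite)
    fix i i' assume ii: "i \<in> ?S" "i' \<in> ?S" "?\<phi> i = ?\<phi> i'"
    have ext: "i \<in> {1..k} \<rightarrow>\<^sub>E {1..N}" "i' \<in> {1..k} \<rightarrow>\<^sub>E {1..N}" using ii unfolding Fs_def by auto
    have cv: "colv k l i = colv k l i'" and s1: "i (Suc l) = i' (Suc l)" using ii(3) by auto
    show "i = i'"
    proof
      fix t
      show "i t = i' t"
      proof (cases "t \<in> {1..k}")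
        case False then show ?thesis using ext by (simp add: PiE_def extensional_def)
      next
        case True
        consider (a) "t \<le> l" | (b) "t = Suc l" | (c) "t = Suc (Suc l)" | (d) "Suc (Suc l) < t" by linarith
        then show ?thesis
        proof cases
          case a
          have "colv k l i t = colv k l i' t" using cv by simp
          moreover have "t \<in> {1..k-2}" using a True l by auto
          ultimately show ?thesis using a unfolding colv_def by simp
        next
          case b then show ?thesis using s1 by simp
        next
          case c
          have "colv k l i l = colv k l i' l" using cv by simp
          moreover have "l \<le> k - 2" using l by linarith
          ultimately have "i l = i' l" using l unfolding colv_def by simp
          then show ?thesis using c ii(1,2) by simp
        next
          case d
          have "colv k l i (t - 2) = colv k l i' (t - 2)" using cv by simp
          moreover have "t - 2 \<in> {1..k-2}" "\<not> t - 2 \<le> l" "t - 2 + 2 = t" using d True by auto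
          ultimately show ?thesis unfolding colv_def by simp
        qed
      qed
    qed
  qed
  also have "\<dots> \<le> card (Fs R N (k - 2) (pc l p) \<times> {1..N})"
    using sub by (rule card_mono[rotated]) (simp add: Fs_finite)
  also have "\<dots> = N * card (Fs R N (k - 2) (pc l p))" by (simp add: card_cartesian_product)
  finally show ?thesis by simp
qed

end


context
  fixes R :: "nat \<Rightarrow> ((nat \<times> nat) \<times> (nat \<times> nat)) set" and B :: nat
  assumes C2: "\<And>N p q r. p \<in> {1..N} \<Longrightarrow> q \<in> {1..N} \<Longrightarrow> r \<in> {1..N} \<Longrightarrow>
      card {s \<in> {1..N}. ((p, q), (r, s)) \<in> R N} \<le> B"
    and B1: "1 \<le> B"
    and C1': "(\<lambda>N. real (M1 R N) / real N ^ 2) \<longlonglongrightarrow> 0"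
    and C3': "(\<lambda>N. real (C3c R N) / real N ^ 2) \<longlonglongrightarrow> 0"
begin

lemma main_ind: "invol k p \<Longrightarrow> crossp k p \<Longrightarrow>
   (\<lambda>N. real (card (Fs R N k p)) / real N ^ (k div 2 + 1)) \<longlonglongrightarrow> 0"
proof (induction k arbitrary: p rule: less_induct)
  case (less k)
  obtain a b c d where abcd: "1 \<le> a" "a < b" "b < c" "c < d" "d \<le> k" "p a = c" "p b = d"
    using less.prems(2) unfolding crossp_def by blast
  have pin: "\<And>t. t \<in> {1..k} \<Longrightarrow> p t \<in> {1..k} \<and> p t \<noteq> t \<and> p (p t) = t"
    using less.prems(1) unfolding invol_def by simp
  have pca: "p c = a" using pin[of a] abcd by auto
  define P where "P m \<longleftrightarrow> 1 \<le> m \<and> m \<le> k \<and> p m < m" for m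
  define m where "m = (LEAST m. P m)"
  have Pc: "P c" unfolding P_def using abcd pca by auto
  have Pm: "P m" unfolding m_def using Pc by (rule LeastI)
  have mc: "m \<le> c" unfolding m_def using Pc by (rule Least_le)
  have minm: "t < p t" if t: "1 \<le> t" "t < m" for t
  proof -
    have "\<not> P t" using t(2) unfolding m_def by (rule not_less_Least)
    moreover have tk: "t \<le> k" using t Pm unfolding P_def by auto
    ultimately have "\<not> p t < t" using t unfolding P_def by auto
    moreover have "p t \<noteq> t" using pin[of t] t tk by auto
    ultimately show "t < p t" by linarith
  qed
  define l where "l = p m"
  have m1: "1 \<le> m" "m < k" "l < m" using Pm mc abcd unfolding P_def l_def by auto
  have lk: "l \<in> {1..k}" "p l = m" using pin[of m] m1 Pm unfolding l_def P_def by auto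
  have k4: "4 \<le> k" using abcd by linarith
  have N1ev: "eventually (\<lambda>N. 1 \<le> N) sequentially" by (rule eventually_ge_at_top)
  have nonneg: "eventually (\<lambda>N. 0 \<le> real (card (Fs R N k p)) / real N ^ (k div 2 + 1)) sequentially"
    by simp
  have e2: "real N ^ (k div 2 + 1) = real N ^ (k div 2 - 1) * real N ^ 2" for N
  proof -
    have "k div 2 + 1 = (k div 2 - 1) + 2" using k4 by auto
    then show ?thesis by (simp only: power_add)
  qed
  show ?case
  proof (cases "Suc l = m")
    case True
    have lA: "1 \<le> l" "Suc (Suc l) \<le> k" "p l = Suc l" "p (Suc l) = l"
      using lk m1 True l_def by auto
    have fr: "l = 1 \<or> l - 1 < p (l - 1)"
    proof (cases "l = 1")
      case False then have "1 \<le> l - 1" "l - 1 < m" using lA True by auto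
      then show ?thesis using minm by blast
    qed simp
    let ?p' = "pc l p"
    have kd: "(k-2) div 2 + 1 = k div 2" using k4 by auto
    have IH: "(\<lambda>N. real (card (Fs R N (k-2) ?p')) / real N ^ (k div 2)) \<longlonglongrightarrow> 0"
    proof -
      have "k - 2 < k" using k4 by simp
      then have "(\<lambda>N. real (card (Fs R N (k-2) ?p')) / real N ^ ((k-2) div 2 + 1)) \<longlonglongrightarrow> 0"
        using less.IH[of "k-2" ?p'] invol_pc[OF less.prems(1) lA(1,2,3)]
          crossp_pc[OF less.prems(1) lA(1,2,3) less.prems(2)] by blast
      then show ?thesis unfolding kd .
    qed
    have bound: "real (card (Fs R N k p)) / real N ^ (k div 2 + 1) \<le>
        real (card (Fs R N (k-2) ?p')) / real N ^ (k div 2) + real B ^ k * (real (C3c R N) / real N ^ 2)"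
      if N: "1 \<le> N" for N
    proof -
      let ?S0 = "{i \<in> Fs R N k p. i (Suc (Suc l)) = i l}"
      let ?S1 = "{i \<in> Fs R N k p. i (Suc (Suc l)) \<noteq> i l}"
      let ?F = "card (Fs R N (k-2) ?p')"
      let ?C = "C3c R N"
      have eqS: "Fs R N k p = ?S0 \<union> ?S1" by auto
      from card_Un_le[of ?S0 ?S1] have "card (Fs R N k p) \<le> card ?S0 + card ?S1"
        unfolding eqS[symmetric] .
      also have "\<dots> \<le> N * ?F + ?C * N ^ (k div 2 - 1) * B ^ k"
        using collapse_card[OF less.prems(1) lA(1,2,3)] boundA1[OF C2 B1 less.prems(1) lA fr]
        by (rule add_mono)
      finally have "real (card (Fs R N k p)) \<le> real (N * ?F + ?C * N ^ (k div 2 - 1) * B ^ k)"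
        by (simp only: of_nat_le_iff)
      then have ineq: "real (card (Fs R N k p)) \<le> real N * real ?F + real ?C * real N ^ (k div 2 - 1) * real B ^ k"
        by simp
      have Npos: "0 < real N" using N by simp
      have e1: "real N ^ (k div 2 + 1) = real N * real N ^ (k div 2)" by simp
      have "real (card (Fs R N k p)) / real N ^ (k div 2 + 1) \<le>
          (real N * real ?F + real ?C * real N ^ (k div 2 - 1) * real B ^ k) / real N ^ (k div 2 + 1)"
        using ineq by (rule divide_right_mono) simp
      also have "\<dots> = real N * real ?F / real N ^ (k div 2 + 1) +
          real ?C * real N ^ (k div 2 - 1) * real B ^ k / real N ^ (k div 2 + 1)"
        by (rule add_divide_distrib)
      also have "real N * real ?F / real N ^ (k div 2 + 1) = real ?F / real N ^ (k div 2)"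
        unfolding e1 using Npos by simp
      also have "real ?C * real N ^ (k div 2 - 1) * real B ^ k / real N ^ (k div 2 + 1)
          = real B ^ k * (real ?C / real N ^ 2)"
        unfolding e2 using Npos by (simp add: field_simps)
      finally show ?thesis .
    qed
    have lim: "(\<lambda>N. real (card (Fs R N (k-2) ?p')) / real N ^ (k div 2)
         + real B ^ k * (real (C3c R N) / real N ^ 2)) \<longlonglongrightarrow> 0"
    proof -
      have "(\<lambda>N. real B ^ k * (real (C3c R N) / real N ^ 2)) \<longlonglongrightarrow> real B ^ k * 0"
        by (intro tendsto_mult tendsto_const C3')
      then have "(\<lambda>N. real (card (Fs R N (k-2) ?p')) / real N ^ (k div 2)
         + real B ^ k * (real (C3c R N) / real N ^ 2)) \<longlonglongrightarrow> 0 + real B ^ k * 0"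
        by (intro tendsto_add IH)
      then show ?thesis by simp
    qed
    show ?thesis
    proof (rule tendsto_sandwich[OF _ _ tendsto_const lim])
      show "eventually (\<lambda>N. 0 \<le> real (card (Fs R N k p)) / real N ^ (k div 2 + 1)) sequentially"
        by (rule nonneg)
      show "eventually (\<lambda>N. real (card (Fs R N k p)) / real N ^ (k div 2 + 1) \<le>
        real (card (Fs R N (k-2) ?p')) / real N ^ (k div 2) + real B ^ k * (real (C3c R N) / real N ^ 2)) sequentially"
        using N1ev by (rule eventually_mono) (rule bound)
    qed
  next
    case False
    then have lm: "Suc l < m" using m1 by simp
    have op: "m - 1 < p (m - 1)" using minm[of "m - 1"] lm lk by auto
    have bound: "real (card (Fs R N k p)) / real N ^ (k div 2 + 1) \<le>
        real B ^ k * (real (M1 R N) / real N ^ 2)"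
      if N: "1 \<le> N" for N
    proof -
      have lB: "1 \<le> l" using lk by auto
      have "card (Fs R N k p) \<le> M1 R N * N ^ (k div 2 - 1) * B ^ k"
        by (rule boundB[OF C2 B1 less.prems(1) lB lm m1(2) lk(2) _ op]) (assumption, assumption, assumption, rule l_def[symmetric])
      then have ineq: "real (card (Fs R N k p)) \<le> real (M1 R N) * real N ^ (k div 2 - 1) * real B ^ k"
        by (metis of_nat_le_iff of_nat_mult of_nat_power)
      have Npos: "0 < real N" using N by simp
      have "real (card (Fs R N k p)) / real N ^ (k div 2 + 1) \<le>
          real (M1 R N) * real N ^ (k div 2 - 1) * real B ^ k / real N ^ (k div 2 + 1)"
        using ineq by (rule divide_right_mono) simp
      also have "\<dots> = real B ^ k * (real (M1 R N) / real N ^ 2)"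
        unfolding e2 using Npos by (simp add: field_simps)
      finally show ?thesis .
    qed
    have lim: "(\<lambda>N. real B ^ k * (real (M1 R N) / real N ^ 2)) \<longlonglongrightarrow> 0"
    proof -
      have "(\<lambda>N. real B ^ k * (real (M1 R N) / real N ^ 2)) \<longlonglongrightarrow> real B ^ k * 0"
        by (intro tendsto_mult tendsto_const C1')
      then show ?thesis by simp
    qed
    show ?thesis
    proof (rule tendsto_sandwich[OF _ _ tendsto_const lim])
      show "eventually (\<lambda>N. 0 \<le> real (card (Fs R N k p)) / real N ^ (k div 2 + 1)) sequentially"
        by (rule nonneg)
      show "eventually (\<lambda>N. real (card (Fs R N k p)) / real N ^ (k div 2 + 1) \<le>
        real B ^ k * (real (M1 R N) / real N ^ 2)) sequentially"
        using N1ev by (rule eventually_mono) (rule bound)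
    qed
  qed
qed

end


lemma partner_ex1:
  assumes pp: "pair_partition k \<pi>" and l: "l \<in> {1..k}"
  shows "\<exists>!m. m \<noteq> l \<and> {l, m} \<in> \<pi>"
proof -
  have po: "partition_on {1..k} \<pi>" and c2: "\<forall>Bl\<in>\<pi>. card Bl = 2"
    using pp unfolding pair_partition_def by auto
  have "l \<in> \<Union>\<pi>" using partition_onD1[OF po] l by simp
  then obtain Bl where Bl: "Bl \<in> \<pi>" "l \<in> Bl" by blast
  have "card Bl = 2" using c2 Bl by blast
  then obtain x y where xy: "Bl = {x,y}" "x \<noteq> y" unfolding card_2_iff by blast
  have "\<exists>m. m \<noteq> l \<and> Bl = {l, m}" using xy Bl(2) by auto
  then obtain m where m: "m \<noteq> l" "Bl = {l,m}" by blast
  show ?thesis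
  proof (rule ex1I[of _ m])
    show "m \<noteq> l \<and> {l, m} \<in> \<pi>" using m Bl by simp
    fix m' assume m': "m' \<noteq> l \<and> {l, m'} \<in> \<pi>"
    have "{l, m'} = {l, m}"
    proof (rule ccontr)
      assume ne: "{l, m'} \<noteq> {l, m}"
      have "{l, m'} \<inter> {l, m} = {}"
        using disjointD[OF partition_onD2[OF po], of "{l, m'}" "{l, m}"] m' Bl m ne by blast
      then show False by auto
    qed
    then show "m' = m" using m m' by (auto simp: doubleton_eq_iff)
  qed
qed

definition ptn :: "nat set set \<Rightarrow> nat \<Rightarrow> nat" where "ptn \<pi> l = (SOME m. m \<noteq> l \<and> {l, m} \<in> \<pi>)"

lemma ptn_facts:
  assumes pp: "pair_partition k \<pi>" and l: "l \<in> {1..k}"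
  shows "ptn \<pi> l \<noteq> l" "{l, ptn \<pi> l} \<in> \<pi>" "ptn \<pi> l \<in> {1..k}"
proof -
  have "\<exists>m. m \<noteq> l \<and> {l, m} \<in> \<pi>" using partner_ex1[OF pp l] by blast
  then have h: "ptn \<pi> l \<noteq> l \<and> {l, ptn \<pi> l} \<in> \<pi>" unfolding ptn_def by (rule someI_ex)
  then show "ptn \<pi> l \<noteq> l" "{l, ptn \<pi> l} \<in> \<pi>" by auto
  have po: "partition_on {1..k} \<pi>" using pp unfolding pair_partition_def by auto
  have "ptn \<pi> l \<in> \<Union>\<pi>" using h by blast
  then show "ptn \<pi> l \<in> {1..k}" using partition_onD1[OF po] by simp
qed

lemma ptn_unique:
  assumes pp: "pair_partition k \<pi>" and l: "l \<in> {1..k}" and m: "m \<noteq> l" "{l, m} \<in> \<pi>"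
  shows "ptn \<pi> l = m"
  using partner_ex1[OF pp l] ptn_facts(1,2)[OF pp l] m by blast

lemma invol_ptn: assumes pp: "pair_partition k \<pi>" shows "invol k (ptn \<pi>)"
  unfolding invol_def
proof
  fix l assume l: "l \<in> {1..k}"
  note f = ptn_facts[OF pp l]
  have "ptn \<pi> (ptn \<pi> l) = l"
  proof (rule ptn_unique[OF pp f(3)])
    show "l \<noteq> ptn \<pi> l" using f(1) by simp
    show "{ptn \<pi> l, l} \<in> \<pi>" using f(2) by (simp add: insert_commute)
  qed
  then show "ptn \<pi> l \<in> {1..k} \<and> ptn \<pi> l \<noteq> l \<and> ptn \<pi> (ptn \<pi> l) = l" using f by simp
qed

lemma crossp_ptn: assumes pp: "pair_partition k \<pi>" and cr: "crossing k \<pi>" shows "crossp k (ptn \<pi>)"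
proof -
  obtain a b c d where abcd: "1 \<le> a" "a < b" "b < c" "c < d" "d \<le> k" "{a, c} \<in> \<pi>" "{b, d} \<in> \<pi>"
    using cr unfolding crossing_def by blast
  have "ptn \<pi> a = c" by (rule ptn_unique[OF pp]) (use abcd in auto)
  moreover have "ptn \<pi> b = d" by (rule ptn_unique[OF pp]) (use abcd in auto)
  ultimately show ?thesis unfolding crossp_def using abcd by blast
qed

lemma E_sub: assumes pp: "pair_partition k \<pi>" shows "E_set R N k \<pi> \<subseteq> Fs R N k (ptn \<pi>)"
proof
  fix i assume i: "i \<in> E_set R N k \<pi>"
  then have ext: "i \<in> {1..k} \<rightarrow>\<^sub>E {1..N}" and
    iff: "\<And>l m. l \<in> {1..k} \<Longrightarrow> m \<in> {1..k} \<Longrightarrow> (\<exists>B\<in>\<pi>. l \<in> B \<and> m \<in> B) \<longleftrightarrow>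
       ((i l, i (cyc_next k l)), (i m, i (cyc_next k m))) \<in> R N"
    unfolding E_set_def by auto
  show "i \<in> Fs R N k (ptn \<pi>)" unfolding Fs_def
  proof (intro CollectI conjI ext ballI)
    fix l assume l: "l \<in> {1..k}"
    note f = ptn_facts[OF pp l]
    have "\<exists>B\<in>\<pi>. l \<in> B \<and> ptn \<pi> l \<in> B" using f(2) by blast
    then show "((i l, i (cyc_next k l)), (i (ptn \<pi> l), i (cyc_next k (ptn \<pi> l)))) \<in> R N"
      using iff[OF l f(3)] by blast
  qed
qed

theorem mainTheorem7:
  fixes R :: "nat \<Rightarrow> ((nat \<times> nat) \<times> (nat \<times> nat)) set"
    and k :: nat and \<pi> :: "nat set set"
  assumes equiv: "\<And>N. equiv ({1..N} \<times> {1..N}) (R N)"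
    and flip: "\<And>N p q. p \<in> {1..N} \<Longrightarrow> q \<in> {1..N} \<Longrightarrow> ((p, q), (q, p)) \<in> R N"
    and C1: "(\<lambda>N. real (Max ((\<lambda>p. card {(q, r, s). q \<in> {1..N} \<and> r \<in> {1..N} \<and> s \<in> {1..N}
                 \<and> ((p, q), (r, s)) \<in> R N}) ` {1..N})) / real N ^ 2) \<longlonglongrightarrow> 0"
    and C2: "\<exists>B::nat. \<forall>N p q r. p \<in> {1..N} \<longrightarrow> q \<in> {1..N} \<longrightarrow> r \<in> {1..N} \<longrightarrow>
                 card {s \<in> {1..N}. ((p, q), (r, s)) \<in> R N} \<le> B"
    and C3: "(\<lambda>N. real (card {(p, q, r). p \<in> {1..N} \<and> q \<in> {1..N} \<and> r \<in> {1..N}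
                 \<and> ((p, q), (q, r)) \<in> R N \<and> r \<noteq> p}) / real N ^ 2) \<longlonglongrightarrow> 0"
    and k_even: "even k"
    and pp: "pair_partition k \<pi>"
    and cr: "crossing k \<pi>"
  shows "(\<lambda>N. real (card (E_set R N k \<pi>)) / real N ^ (k div 2 + 1)) \<longlonglongrightarrow> 0"
proof -
  obtain B0 :: nat where B0: "\<forall>N p q r. p \<in> {1..N} \<longrightarrow> q \<in> {1..N} \<longrightarrow> r \<in> {1..N} \<longrightarrow>
                 card {s \<in> {1..N}. ((p, q), (r, s)) \<in> R N} \<le> B0" using C2 by blast
  have C2': "card {s \<in> {1..N}. ((p, q), (r, s)) \<in> R N} \<le> Suc B0"
    if "p \<in> {1..N}" "q \<in> {1..N}" "r \<in> {1..N}" for N p q r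
    using B0 that by (meson le_SucI)
  have C1': "(\<lambda>N. real (M1 R N) / real N ^ 2) \<longlonglongrightarrow> 0" unfolding M1_def by (rule C1)
  have C3': "(\<lambda>N. real (C3c R N) / real N ^ 2) \<longlonglongrightarrow> 0" unfolding C3c_def by (rule C3)
  have lim: "(\<lambda>N. real (card (Fs R N k (ptn \<pi>))) / real N ^ (k div 2 + 1)) \<longlonglongrightarrow> 0"
    by (rule main_ind[of R "Suc B0"]) (use C2' C1' C3' invol_ptn[OF pp] crossp_ptn[OF pp cr] in auto)
  show ?thesis
  proof (rule tendsto_sandwich[OF _ _ tendsto_const lim])
    show "eventually (\<lambda>N. 0 \<le> real (card (E_set R N k \<pi>)) / real N ^ (k div 2 + 1)) sequentially"
      by simp
    show "eventually (\<lambda>N. real (card (E_set R N k \<pi>)) / real N ^ (k div 2 + 1) \<le>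
        real (card (Fs R N k (ptn \<pi>))) / real N ^ (k div 2 + 1)) sequentially"
    proof (rule always_eventually, rule allI)
      fix N
      have "card (E_set R N k \<pi>) \<le> card (Fs R N k (ptn \<pi>))"
        by (rule card_mono[OF Fs_finite E_sub[OF pp]])
      then show "real (card (E_set R N k \<pi>)) / real N ^ (k div 2 + 1) \<le>
        real (card (Fs R N k (ptn \<pi>))) / real N ^ (k div 2 + 1)"
        by (intro divide_right_mono) auto
    qed
  qed
qed


end
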